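(* Let $G=(V,E)$ be a connected undirected graph on $n$ nodes with Laplacian $L$, let $\kappa_1,\dots,\kappa_n>0$, and let $D_\kappa=\mathrm{diag}(\kappa_1,\dots,\kappa_n)$. For $S\subseteq V$ let $D_S$ be the diagonal $0/1$ matrix with $(D_S)_{ii}=1$ iff $i\in S$, and set $Q_S=L+D_\kappa D_S$ (write $Q_v$ for $Q_{\{v\}}$). Define $f:2^V\to\mathbb{R}$ by $f(\emptyset)=0$ and $f(S)=C-\mathrm{tr}(Q_S^{-1})$ for $S\neq\emptyset$, where $C=2\max_{v\in V}\mathrm{tr}(Q_v^{-1})$. Then $f$ is non-decreasing: for all $S_1\subseteq S_2\subseteq V$, $f(S_1)\le f(S_2)$.
   Context: For nonempty $S$, the matrix $Q_S$ is positive definite, so $Q_S^{-1}$ exists. A set function $f$ is non-decreasing if $A\subseteq B$ implies $f(A)\le f(B)$. *)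

theory Defs
  imports "HOL-Analysis.Analysis"
begin

text \<open>Vertices are the elements of a finite type 'n (so n = CARD('n)).
  A simple undirected graph is a symmetric irreflexive edge relation E.\<close>

definition undirected_graph :: "('n \<Rightarrow> 'n \<Rightarrow> bool) \<Rightarrow> bool" where
  "undirected_graph E \<longleftrightarrow> (\<forall>u v. E u v \<longrightarrow> E v u) \<and> (\<forall>v. \<not> E v v)"

definition connected_graph :: "('n \<Rightarrow> 'n \<Rightarrow> bool) \<Rightarrow> bool" where
  "connected_graph E \<longleftrightarrow> (\<forall>u v. E\<^sup>*\<^sup>* u v)"

definition laplacian :: "('n::finite \<Rightarrow> 'n \<Rightarrow> bool) \<Rightarrow> real^'n^'n" where
  "laplacian E = (\<chi> i j. if i = j then real (card {k. E i k})
                           else if E i j then -1 else 0)"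

definition diag_mat :: "('n::finite \<Rightarrow> real) \<Rightarrow> real^'n^'n" where
  "diag_mat d = (\<chi> i j. if i = j then d i else 0)"

definition sel_mat :: "'n::finite set \<Rightarrow> real^'n^'n" where
  "sel_mat S = diag_mat (\<lambda>i. if i \<in> S then 1 else 0)"

definition Q_mat :: "('n::finite \<Rightarrow> 'n \<Rightarrow> bool) \<Rightarrow> ('n \<Rightarrow> real) \<Rightarrow> 'n set \<Rightarrow> real^'n^'n" where
  "Q_mat E \<kappa> S = laplacian E + diag_mat \<kappa> ** sel_mat S"

definition C_const :: "('n::finite \<Rightarrow> 'n \<Rightarrow> bool) \<Rightarrow> ('n \<Rightarrow> real) \<Rightarrow> real" where
  "C_const E \<kappa> = 2 * Max (range (\<lambda>v. trace (matrix_inv (Q_mat E \<kappa> {v}))))"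

definition f_set :: "('n::finite \<Rightarrow> 'n \<Rightarrow> bool) \<Rightarrow> ('n \<Rightarrow> real) \<Rightarrow> 'n set \<Rightarrow> real" where
  "f_set E \<kappa> S = (if S = {} then 0 else C_const E \<kappa> - trace (matrix_inv (Q_mat E \<kappa> S)))"

end

theory Submission
  imports Defs
begin


lemma inv_props:
  fixes A :: "real^'n::finite^'n"
  assumes "invertible A"
  shows "A ** matrix_inv A = mat 1" "matrix_inv A ** A = mat 1"
proof -
  have "\<exists>A'. A ** A' = mat 1 \<and> A' ** A = mat 1" using assms invertible_def by blast
  from someI_ex[OF this] show "A ** matrix_inv A = mat 1" "matrix_inv A ** A = mat 1"
    unfolding matrix_inv_def by auto
qed

lemma sym_inner:
  fixes A :: "real^'n::finite^'n"
  assumes "transpose A = A"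
  shows "z \<bullet> (A *v y) = (A *v z) \<bullet> y"
  by (metis assms dot_lmul_matrix transpose_matrix_vector)

lemma inv_quad_nonneg:
  fixes A :: "real^'n::finite^'n"
  assumes "invertible A" "transpose A = A" "\<And>x. 0 \<le> x \<bullet> (A *v x)"
  shows "0 \<le> x \<bullet> (matrix_inv A *v x)"
proof -
  define y where "y = matrix_inv A *v x"
  have "A *v y = x" unfolding y_def
    by (simp add: matrix_vector_mul_assoc inv_props(1)[OF assms(1)])
  then have "x \<bullet> y = y \<bullet> (A *v y)" by (simp add: inner_commute)
  then show ?thesis using assms(3)[of y] y_def by simp
qed

lemma trace_quad:
  fixes M :: "real^'n::finite^'n"
  shows "trace M = (\<Sum>i\<in>UNIV. axis i 1 \<bullet> (M *v axis i 1))"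
proof -
  have "axis i 1 \<bullet> (M *v axis i 1) = M$i$i" for i
    unfolding inner_axis' by (simp add: matrix_vector_mult_def axis_def if_distrib cong: if_cong)
  then show ?thesis unfolding trace_def by simp
qed

lemma inv_quad_mono:
  fixes A B :: "real^'n::finite^'n"
  assumes "invertible A" "invertible B" "transpose A = A" "\<And>x. 0 \<le> x \<bullet> (A *v x)"
    "\<And>x. x \<bullet> (A *v x) \<le> x \<bullet> (B *v x)"
  shows "x \<bullet> (matrix_inv B *v x) \<le> x \<bullet> (matrix_inv A *v x)"
proof -
  define y where "y = matrix_inv B *v x"
  define z where "z = matrix_inv A *v x"
  have By: "B *v y = x" unfolding y_def
    by (simp add: matrix_vector_mul_assoc inv_props(1)[OF assms(2)])
  have Az: "A *v z = x" unfolding z_def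
    by (simp add: matrix_vector_mul_assoc inv_props(1)[OF assms(1)])
  have "0 \<le> (y - z) \<bullet> (A *v (y - z))" by (rule assms(4))
  also have "\<dots> = y \<bullet> (A *v y) - y \<bullet> (A *v z) - z \<bullet> (A *v y) + z \<bullet> (A *v z)"
    by (simp add: matrix_vector_mult_diff_distrib inner_diff_left inner_diff_right)
  also have "z \<bullet> (A *v y) = x \<bullet> y" using sym_inner[OF assms(3)] Az by simp
  finally have "0 \<le> y \<bullet> (A *v y) - 2 * (x \<bullet> y) + z \<bullet> x"
    using Az by (simp add: inner_commute)
  moreover have "y \<bullet> (A *v y) \<le> y \<bullet> x" using assms(5)[of y] By by simp
  ultimately show ?thesis unfolding y_def z_def by (simp add: inner_commute)
qed

lemma trace_inv_mono:
  fixes A B :: "real^'n::finite^'n"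
  assumes "invertible A" "invertible B" "transpose A = A" "\<And>x. 0 \<le> x \<bullet> (A *v x)"
    "\<And>x. x \<bullet> (A *v x) \<le> x \<bullet> (B *v x)"
  shows "trace (matrix_inv B) \<le> trace (matrix_inv A)"
  unfolding trace_quad by (rule sum_mono, rule inv_quad_mono[OF assms])

lemma trace_inv_nonneg:
  fixes A :: "real^'n::finite^'n"
  assumes "invertible A" "transpose A = A" "\<And>x. 0 \<le> x \<bullet> (A *v x)"
  shows "0 \<le> trace (matrix_inv A)"
  unfolding trace_quad by (rule sum_nonneg, rule inv_quad_nonneg[OF assms])



lemma lap_mult:
  assumes "undirected_graph E"
  shows "(laplacian E *v x) $ i = (\<Sum>j\<in>UNIV. if E i j then x$i - x$j else 0)"
proof -
  have nE: "\<not> E i i" using assms unfolding undirected_graph_def by blast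
  have "(laplacian E *v x) $ i = (\<Sum>j\<in>UNIV. (if j = i then real (card {k. E i k}) * x$i else 0)
      - (if E i j then x$j else 0))"
    unfolding matrix_vector_mult_def laplacian_def using nE
    by (auto intro!: sum.cong)
  also have "\<dots> = real (card {k. E i k}) * x$i - (\<Sum>j\<in>UNIV. if E i j then x$j else 0)"
    by (simp add: sum_subtractf)
  also have "real (card {k. E i k}) * x$i = (\<Sum>j\<in>UNIV. if E i j then x$i else 0)"
    by (simp add: sum.If_cases)
  finally show ?thesis by (simp add: sum_subtractf[symmetric] if_distrib cong: if_cong)
qed

lemma dk_entry: "(diag_mat d ** M) $ i $ j = d i * M $ i $ j"
proof -
  have "(\<Sum>k\<in>UNIV. diag_mat d $ i $ k * M $ k $ j) = (\<Sum>k\<in>UNIV. if k = i then d i * M$i$j else 0)"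
    by (rule sum.cong) (auto simp: diag_mat_def)
  then show ?thesis by (simp add: matrix_matrix_mult_def)
qed

lemma dk_mult: "((diag_mat \<kappa> ** sel_mat S) *v x) $ i = (if i \<in> S then \<kappa> i * x$i else 0)"
proof -
  have "(\<Sum>j\<in>UNIV. (diag_mat \<kappa> ** sel_mat S) $ i $ j * x $ j)
     = (\<Sum>j\<in>UNIV. if j = i then (if i \<in> S then \<kappa> i * x$i else 0) else 0)"
    unfolding dk_entry by (rule sum.cong) (auto simp: sel_mat_def diag_mat_def)
  then show ?thesis by (simp add: matrix_vector_mult_def)
qed

lemma Q_quad:
  assumes "undirected_graph E"
  shows "x \<bullet> (Q_mat E \<kappa> S *v x) = (\<Sum>i\<in>UNIV. \<Sum>j\<in>UNIV. if E i j then x$i * (x$i - x$j) else 0)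
     + (\<Sum>i\<in>UNIV. if i \<in> S then \<kappa> i * (x$i)^2 else 0)"
proof -
  have "x$i * (Q_mat E \<kappa> S *v x)$i = (\<Sum>j\<in>UNIV. if E i j then x$i * (x$i - x$j) else 0)
     + (if i \<in> S then \<kappa> i * (x$i)^2 else 0)" for i
    unfolding Q_mat_def matrix_vector_mult_add_rdistrib vector_add_component lap_mult[OF assms] dk_mult
    by (simp add: sum_distrib_left algebra_simps power2_eq_square if_distrib cong: if_cong)
  then show ?thesis unfolding inner_vec_def by (simp add: sum.distrib)
qed

lemma lap_sum:
  assumes "undirected_graph E"
  shows "2 * (\<Sum>i\<in>UNIV. \<Sum>j\<in>UNIV. if E i j then x$i * (x$i - x$j) else (0::real))
     = (\<Sum>i\<in>UNIV. \<Sum>j\<in>UNIV. if E i j then (x$i - x$j)^2 else 0)"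
proof -
  have sy: "E i j = E j i" for i j using assms unfolding undirected_graph_def by blast
  let ?a = "\<Sum>i\<in>UNIV. \<Sum>j\<in>UNIV. if E i j then x$i * (x$i - x$j) else (0::real)"
  have "?a = (\<Sum>j\<in>UNIV. \<Sum>i\<in>UNIV. if E i j then x$i * (x$i - x$j) else (0::real))"
    by (rule sum.swap)
  also have "\<dots> = (\<Sum>i\<in>UNIV. \<Sum>j\<in>UNIV. if E i j then x$j * (x$j - x$i) else (0::real))"
    using sy by simp
  finally have "2 * ?a = ?a + (\<Sum>i\<in>UNIV. \<Sum>j\<in>UNIV. if E i j then x$j * (x$j - x$i) else (0::real))"
    by simp
  also have "\<dots> = (\<Sum>i\<in>UNIV. \<Sum>j\<in>UNIV. if E i j then (x$i - x$j)^2 else 0)"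
    by (simp add: sum.distrib[symmetric] power2_eq_square algebra_simps if_distrib cong: if_cong)
  finally show ?thesis .
qed



lemma Q_sym:
  assumes "undirected_graph E"
  shows "transpose (Q_mat E \<kappa> S) = Q_mat E \<kappa> S"
proof -
  have sy: "E i j = E j i" for i j using assms unfolding undirected_graph_def by blast
  show ?thesis
    unfolding transpose_def vec_eq_iff
    by (simp add: Q_mat_def dk_entry) (auto simp: laplacian_def sel_mat_def diag_mat_def sy)
qed

lemma lap_nonneg:
  assumes "undirected_graph E"
  shows "0 \<le> (\<Sum>i\<in>UNIV. \<Sum>j\<in>UNIV. if E i j then x$i * (x$i - x$j) else (0::real))"
proof -
  have "0 \<le> (\<Sum>i\<in>UNIV. \<Sum>j\<in>UNIV. if E i j then (x$i - x$j)^2 else (0::real))"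
    by (intro sum_nonneg) auto
  then show ?thesis using lap_sum[OF assms, of x] by linarith
qed

lemma Q_psd:
  assumes "undirected_graph E" "\<And>i. \<kappa> i > 0"
  shows "0 \<le> x \<bullet> (Q_mat E \<kappa> S *v x)"
proof -
  have "0 \<le> (\<Sum>i\<in>UNIV. if i \<in> S then \<kappa> i * (x$i)^2 else 0)"
    using assms(2) by (intro sum_nonneg) (auto simp: less_imp_le)
  then show ?thesis unfolding Q_quad[OF assms(1)] using lap_nonneg[OF assms(1), of x] by linarith
qed

lemma Q_mono:
  assumes "undirected_graph E" "\<And>i. \<kappa> i > 0" "S1 \<subseteq> S2"
  shows "x \<bullet> (Q_mat E \<kappa> S1 *v x) \<le> x \<bullet> (Q_mat E \<kappa> S2 *v x)"
proof -
  have "(\<Sum>i\<in>UNIV. if i \<in> S1 then \<kappa> i * (x$i)^2 else 0) \<le> (\<Sum>i\<in>UNIV. if i \<in> S2 then \<kappa> i * (x$i)^2 else 0)"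
    using assms(2,3) by (intro sum_mono) (auto simp: less_imp_le)
  then show ?thesis unfolding Q_quad[OF assms(1)] by linarith
qed

lemma Q_inv:
  assumes "undirected_graph E" "connected_graph E" "\<And>i. \<kappa> i > 0" "S \<noteq> {}"
  shows "invertible (Q_mat E \<kappa> S)"
proof -
  have "x = 0" if Qx: "Q_mat E \<kappa> S *v x = 0" for x
  proof -
    let ?L = "\<Sum>i\<in>UNIV. \<Sum>j\<in>UNIV. if E i j then x$i * (x$i - x$j) else (0::real)"
    let ?K = "\<Sum>i\<in>UNIV. if i \<in> S then \<kappa> i * (x$i)^2 else 0"
    have K0: "0 \<le> ?K" using assms(3) by (intro sum_nonneg) (auto simp: less_imp_le)
    have "?L + ?K = 0" using Q_quad[OF assms(1), of x \<kappa> S] Qx by simp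
    with K0 lap_nonneg[OF assms(1), of x] have L0: "?L = 0" and "?K = 0" by linarith+
    have "\<forall>i\<in>UNIV. (if i \<in> S then \<kappa> i * (x$i)^2 else 0) = 0"
      using \<open>?K = 0\<close> assms(3) by (subst sum_nonneg_eq_0_iff[symmetric]) (auto simp: less_imp_le)
    then have xS: "x$i = 0" if "i \<in> S" for i using that assms(3)[of i] by (auto split: if_splits)
    have "(\<Sum>i\<in>UNIV. \<Sum>j\<in>UNIV. if E i j then (x$i - x$j)^2 else (0::real)) = 0"
      using lap_sum[OF assms(1), of x] L0 by simp
    then have "\<forall>i\<in>UNIV. (\<Sum>j\<in>UNIV. if E i j then (x$i - x$j)^2 else (0::real)) = 0"
      by (subst sum_nonneg_eq_0_iff[symmetric]) (auto intro!: sum_nonneg)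
    then have "\<forall>i\<in>UNIV. \<forall>j\<in>UNIV. (if E i j then (x$i - x$j)^2 else (0::real)) = 0"
      by (subst (asm) sum_nonneg_eq_0_iff) auto
    then have edge: "E i j \<Longrightarrow> x$i = x$j" for i j by (metis (full_types) UNIV_I power_eq_0_iff right_minus_eq)
    obtain v where v: "v \<in> S" using assms(4) by blast
    have "x$u = x$v" for u
    proof -
      have "E\<^sup>*\<^sup>* v u" using assms(2) unfolding connected_graph_def by blast
      then show ?thesis by induction (auto dest: edge)
    qed
    then show "x = 0" using xS[OF v] by (simp add: vec_eq_iff)
  qed
  then show ?thesis
    using invertible_left_inverse matrix_left_invertible_ker by blast
qed


lemma X:
  fixes E :: "'n::finite \<Rightarrow> 'n \<Rightarrow> bool" and \<kappa> :: "'n \<Rightarrow> real"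
  assumes "undirected_graph E"
    and "connected_graph E"
    and "\<And>i. \<kappa> i > 0"
    and "A \<noteq> {}" "A \<subseteq> B"
  shows "trace (matrix_inv (Q_mat E \<kappa> B)) \<le> trace (matrix_inv (Q_mat E \<kappa> A))"
  proof (rule trace_inv_mono)
    show "invertible (Q_mat E \<kappa> A)" by (rule Q_inv[OF assms(1,2,3,4)])
    show "invertible (Q_mat E \<kappa> B)" using assms(4,5) by (intro Q_inv[OF assms(1,2,3)]) blast
    show "transpose (Q_mat E \<kappa> A) = Q_mat E \<kappa> A" by (rule Q_sym[OF assms(1)])
    show "0 \<le> x \<bullet> (Q_mat E \<kappa> A *v x)" for x by (rule Q_psd[OF assms(1,3)])
    show "x \<bullet> (Q_mat E \<kappa> A *v x) \<le> x \<bullet> (Q_mat E \<kappa> B *v x)" for x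
      by (rule Q_mono[OF assms(1,3,5)])
  qed
theorem proposition1:
  fixes E :: "'n::finite \<Rightarrow> 'n \<Rightarrow> bool" and \<kappa> :: "'n \<Rightarrow> real"
    and S1 S2 :: "'n set"
  assumes "undirected_graph E"
    and "connected_graph E"
    and "\<And>i. \<kappa> i > 0"
    and "S1 \<subseteq> S2"
  shows "f_set E \<kappa> S1 \<le> f_set E \<kappa> S2"
proof -
  have mono: "trace (matrix_inv (Q_mat E \<kappa> B)) \<le> trace (matrix_inv (Q_mat E \<kappa> A))"
    if "A \<noteq> {}" "A \<subseteq> B" for A B
    by (rule X[OF assms(1,2,3) that])
  define M where "M = Max (range (\<lambda>v. trace (matrix_inv (Q_mat E \<kappa> {v}))))"
  have C: "C_const E \<kappa> = 2 * M" unfolding C_const_def M_def ..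
  have geM: "trace (matrix_inv (Q_mat E \<kappa> {v})) \<le> M" for v
    unfolding M_def by (intro Max_ge finite_imageI) auto
  have nn: "0 \<le> trace (matrix_inv (Q_mat E \<kappa> {v}))" for v
    by (rule trace_inv_nonneg[OF Q_inv[OF assms(1,2,3)] Q_sym[OF assms(1)] Q_psd[OF assms(1,3)]]) blast
  have fS: "f_set E \<kappa> S = C_const E \<kappa> - trace (matrix_inv (Q_mat E \<kappa> S))" if "S \<noteq> {}" for S
    unfolding f_set_def using that by (rule if_not_P)
  have f0: "f_set E \<kappa> {} = 0" unfolding f_set_def by (rule if_P) (rule refl)
  show ?thesis
  proof (cases "S1 = {}")
    case True
    show ?thesis
    proof (cases "S2 = {}")
      case True then show ?thesis using \<open>S1 = {}\<close> f0 by (simp only: order_refl)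
    next
      case False
      then obtain v where v: "v \<in> S2" by blast
      have "trace (matrix_inv (Q_mat E \<kappa> S2)) \<le> trace (matrix_inv (Q_mat E \<kappa> {v}))"
        using mono[of "{v}" S2] v by blast
      then show ?thesis unfolding True using fS[OF False] f0 C geM[of v] nn[of v] by linarith
    qed
  next
    case False
    then have "S2 \<noteq> {}" using assms(4) by blast
    then show ?thesis using fS[OF False] fS[OF \<open>S2 \<noteq> {}\<close>] mono[OF False assms(4)] by linarith
  qed
qed

end
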